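(* Let $N\ge 2$ and $0<\gamma_1\le\dots\le\gamma_N$. There exists a sum-rate optimal spanning tree on $\{1,\dots,N\}$ in which vertex $N$ has degree $1$.
   Context: For distinct $i,j$ put $\varphi(i,j)=\log_2\!\big(\gamma_i+\frac{\gamma_i}{\gamma_i+\gamma_j}\big)$. For a spanning tree $T$ on $\{1,\dots,N\}$ with neighbor sets $A_i^T$, define $R_{\mathrm s}(T)=\frac{1}{2(N-1)}\sum_{i=1}^N \min_{j\in A_i^T}\varphi(i,j)$. A spanning tree is called sum-rate optimal if it maximizes $R_{\mathrm s}$ over all spanning trees on $\{1,\dots,N\}$. *)

theory Defs
  imports Complex_Main
begin

definition edges_on :: "nat \<Rightarrow> nat set set" where
  "edges_on N = {e. \<exists>i j. e = {i, j} \<and> i \<noteq> j \<and> i \<in> {1..N} \<and> j \<in> {1..N}}"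

definition adj :: "nat set set \<Rightarrow> (nat \<times> nat) set" where
  "adj T = {(i, j). {i, j} \<in> T \<and> i \<noteq> j}"

definition connected_on :: "nat \<Rightarrow> nat set set \<Rightarrow> bool" where
  "connected_on N T \<longleftrightarrow> (\<forall>i\<in>{1..N}. \<forall>j\<in>{1..N}. (i, j) \<in> (adj T)\<^sup>*)"

text \<open>A spanning tree: a connected edge set on {1..N} that is acyclic, where acyclicity
  is expressed as: every edge is a bridge (removing it disconnects the graph).\<close>
definition spanning_tree :: "nat \<Rightarrow> nat set set \<Rightarrow> bool" where
  "spanning_tree N T \<longleftrightarrow> T \<subseteq> edges_on N \<and> connected_on N T \<and>
     (\<forall>e\<in>T. \<not> connected_on N (T - {e}))"

definition nbrs :: "nat set set \<Rightarrow> nat \<Rightarrow> nat set" where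
  "nbrs T i = {j. {i, j} \<in> T \<and> j \<noteq> i}"

definition phi :: "(nat \<Rightarrow> real) \<Rightarrow> nat \<Rightarrow> nat \<Rightarrow> real" where
  "phi \<gamma> i j = log 2 (\<gamma> i + \<gamma> i / (\<gamma> i + \<gamma> j))"

definition sum_rate :: "(nat \<Rightarrow> real) \<Rightarrow> nat \<Rightarrow> nat set set \<Rightarrow> real" where
  "sum_rate \<gamma> N T = 1 / (2 * (real N - 1)) * (\<Sum>i=1..N. Min (phi \<gamma> i ` nbrs T i))"

definition sum_rate_optimal :: "(nat \<Rightarrow> real) \<Rightarrow> nat \<Rightarrow> nat set set \<Rightarrow> bool" where
  "sum_rate_optimal \<gamma> N T \<longleftrightarrow> spanning_tree N T \<and>
     (\<forall>T'. spanning_tree N T' \<longrightarrow> sum_rate \<gamma> N T' \<le> sum_rate \<gamma> N T)"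

end

theory Submission
  imports Defs "HOL-Library.Transitive_Closure_Table"
begin

definition FF :: "(nat \<Rightarrow> real) \<Rightarrow> nat \<Rightarrow> nat \<Rightarrow> real" where
  "FF \<gamma> i j = log 2 (1 + 1 / (\<gamma> i + \<gamma> j))"

lemma FF_mono:
  assumes "0 < \<gamma> a + \<gamma> b" "\<gamma> a + \<gamma> b \<le> \<gamma> c + \<gamma> d"
  shows "FF \<gamma> c d \<le> FF \<gamma> a b"
proof -
  have p: "0 < \<gamma> c + \<gamma> d" using assms by linarith
  have "1 / (\<gamma> c + \<gamma> d) \<le> 1 / (\<gamma> a + \<gamma> b)"
    using assms by (intro divide_left_mono) auto
  moreover have "0 < 1 + 1 / (\<gamma> c + \<gamma> d)" using p by (simp add: add_pos_pos)
  ultimately show ?thesis unfolding FF_def by simp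
qed

lemma FF_sym: "FF \<gamma> i j = FF \<gamma> j i"
  unfolding FF_def by (simp add: add.commute)

lemma phi_split:
  assumes "0 < \<gamma> i" "0 < \<gamma> j"
  shows "phi \<gamma> i j = log 2 (\<gamma> i) + FF \<gamma> i j"
proof -
  have s: "0 < \<gamma> i + \<gamma> j" using assms by simp
  have "\<gamma> i + \<gamma> i / (\<gamma> i + \<gamma> j) = \<gamma> i * (1 + 1 / (\<gamma> i + \<gamma> j))"
    by (simp add: algebra_simps)
  moreover have "0 < 1 + 1 / (\<gamma> i + \<gamma> j)" using s by (simp add: add_pos_pos)
  ultimately show ?thesis unfolding phi_def FF_def using assms by (simp add: log_mult)
qed

lemma nbrs_sub:
  assumes "T \<subseteq> edges_on N"
  shows "nbrs T i \<subseteq> {1..N}"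
  using assms unfolding nbrs_def edges_on_def by (auto simp: doubleton_eq_iff)

lemma c_le:
  assumes "T \<subseteq> edges_on N" "j \<in> nbrs T i"
  shows "Min (phi \<gamma> i ` nbrs T i) \<le> phi \<gamma> i j"
proof -
  have "finite (nbrs T i)" using nbrs_sub[OF assms(1)] finite_subset by blast
  thus ?thesis using assms(2) by (intro Min_le) auto
qed

lemma adj_nbrs: "(x, y) \<in> adj T \<Longrightarrow> y \<in> nbrs T x"
  unfolding adj_def nbrs_def by auto

lemma path_lemma:
  fixes N :: nat and \<gamma> :: "nat \<Rightarrow> real"
  assumes sub: "T \<subseteq> edges_on N"
    and g1: "0 < \<gamma> 1"
    and mono: "\<And>i j. 1 \<le> i \<Longrightarrow> i \<le> j \<Longrightarrow> j \<le> N \<Longrightarrow> \<gamma> i \<le> \<gamma> j"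
  shows "rtrancl_path (\<lambda>x y. (x, y) \<in> adj T) v ys z \<Longrightarrow> z = N \<Longrightarrow> v \<noteq> N \<Longrightarrow>
     distinct (v # ys) \<Longrightarrow> v \<in> {1..N} \<Longrightarrow>
     (\<Sum>i\<in>set (v # ys) - {N}. Min (phi \<gamma> i ` nbrs T i)) \<le>
     (\<Sum>i\<in>set (v # ys) - {v, N}. phi \<gamma> i 1) + phi \<gamma> 1 N + log 2 (\<gamma> v) - log 2 (\<gamma> 1)"
proof (induction v ys z rule: rtrancl_path.induct)
  case (base x)
  then show ?case by simp
next
  case (step v y ys z)
  let ?c = "\<lambda>i. Min (phi \<gamma> i ` nbrs T i)"
  have yN: "y \<in> nbrs T v" using step.hyps(1) by (rule adj_nbrs)
  have yr: "y \<in> {1..N}" using nbrs_sub[OF sub] yN by blast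
  have vr: "v \<in> {1..N}" using step.prems by simp
  have pos: "\<And>i. i \<in> {1..N} \<Longrightarrow> 0 < \<gamma> i"
    using mono g1 by (meson atLeastAtMost_iff dual_order.refl less_le_trans)
  have gv: "\<gamma> 1 \<le> \<gamma> v" using mono vr by auto
  have cv: "?c v \<le> phi \<gamma> v y" using c_le[OF sub yN] .
  have vny: "v \<notin> set (y # ys)" using step.prems by simp
  have fin: "finite (set (y # ys) - {N})" by simp
  have eqL: "set (v # y # ys) - {N} = insert v (set (y # ys) - {N})" using step.prems by auto
  have L: "(\<Sum>i\<in>set (v # y # ys) - {N}. ?c i) = ?c v + (\<Sum>i\<in>set (y # ys) - {N}. ?c i)"
    unfolding eqL using vny by (subst sum.insert) auto
  have eqR: "set (v # y # ys) - {v, N} = set (y # ys) - {N}" using vny by auto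
  show ?case
  proof (cases "y = N")
    case True
    have "ys = []"
    proof (rule ccontr)
      assume "ys \<noteq> []"
      hence "last ys = N" using rtrancl_path_last step.hyps(2) step.prems(1) by fastforce
      moreover have "last ys \<in> set ys" using \<open>ys \<noteq> []\<close> by simp
      ultimately show False using True step.prems(3) by auto
    qed
    hence "set (y # ys) - {N} = {}" using True by auto
    hence "(\<Sum>i\<in>set (y # ys) - {N}. ?c i) = 0" by (simp only: sum.empty)
    hence "(\<Sum>i\<in>set (v # y # ys) - {N}. ?c i) = ?c v" using L by linarith
    moreover have "phi \<gamma> v y \<le> phi \<gamma> 1 N + log 2 (\<gamma> v) - log 2 (\<gamma> 1)"
    proof -
      have "FF \<gamma> v N \<le> FF \<gamma> 1 N" using gv g1 pos[of N] vr by (intro FF_mono) auto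
      thus ?thesis using phi_split[of \<gamma> v N] phi_split[of \<gamma> 1 N] pos vr g1 True by auto
    qed
    moreover have "0 \<le> (\<Sum>i\<in>set (v # y # ys) - {v, N}. phi \<gamma> i 1)"
      unfolding eqR \<open>set (y # ys) - {N} = {}\<close> by (simp only: sum.empty order_refl)
    ultimately show ?thesis using cv by linarith
  next
    case False
    have IH: "(\<Sum>i\<in>set (y # ys) - {N}. ?c i) \<le>
      (\<Sum>i\<in>set (y # ys) - {y, N}. phi \<gamma> i 1) + phi \<gamma> 1 N + log 2 (\<gamma> y) - log 2 (\<gamma> 1)"
      using step.IH step.prems False yr by simp
    have eqR2: "set (y # ys) - {N} = insert y (set (y # ys) - {y, N})" using False by auto
    have R: "(\<Sum>i\<in>set (y # ys) - {N}. phi \<gamma> i 1) = phi \<gamma> y 1 + (\<Sum>i\<in>set (y # ys) - {y, N}. phi \<gamma> i 1)"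
      unfolding eqR2 by (subst sum.insert) auto
    have "phi \<gamma> v y + log 2 (\<gamma> y) \<le> phi \<gamma> y 1 + log 2 (\<gamma> v)"
    proof -
      have "\<gamma> 1 \<le> \<gamma> y" using mono yr by auto
      hence "FF \<gamma> v y \<le> FF \<gamma> y 1" using gv g1 FF_sym[of \<gamma> y 1]
        by (intro FF_mono[of \<gamma> 1 y v y, THEN order_trans]) auto
      thus ?thesis using phi_split[of \<gamma> v y] phi_split[of \<gamma> y 1] pos vr yr g1 by auto
    qed
    moreover have "(\<Sum>i\<in>set (v # y # ys) - {v, N}. phi \<gamma> i 1) = (\<Sum>i\<in>set (y # ys) - {N}. phi \<gamma> i 1)"
      unfolding eqR ..
    ultimately show ?thesis using L IH R cv by linarith
  qed
qed

lemma has_nbr: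
  assumes "connected_on N T" "i \<in> {1..N}" "i \<noteq> 1" "1 \<le> N"
  shows "\<exists>j. j \<in> nbrs T i"
proof -
  have "(i, 1) \<in> (adj T)\<^sup>*" using assms unfolding connected_on_def by auto
  then show ?thesis
  proof (cases rule: converse_rtranclE)
    case base then show ?thesis using assms by simp
  next
    case (step k) then show ?thesis using adj_nbrs by blast
  qed
qed

theorem lemma2:
  fixes N :: nat and \<gamma> :: "nat \<Rightarrow> real"
  assumes "N \<ge> 2"
    and "0 < \<gamma> 1"
    and "\<And>i j. 1 \<le> i \<Longrightarrow> i \<le> j \<Longrightarrow> j \<le> N \<Longrightarrow> \<gamma> i \<le> \<gamma> j"
  shows "\<exists>T. sum_rate_optimal \<gamma> N T \<and> card (nbrs T N) = 1"
proof -
  note g1 = assms(2) and mono = assms(3)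
  define T0 where "T0 = {{1,i} | i. i \<in> {2..N}}"
  have pos: "\<And>i. i \<in> {1..N} \<Longrightarrow> 0 < \<gamma> i"
    using mono g1 by (meson atLeastAtMost_iff dual_order.refl less_le_trans)
  have N1: "N \<noteq> 1" "1 \<in> {1..N}" "N \<in> {1..N}" "N \<in> {2..N}" "(1::nat) \<le> N" using assms(1) by auto
  have nb0: "nbrs T0 i = {1}" if "i \<in> {2..N}" for i
    using that unfolding T0_def nbrs_def by (auto simp: doubleton_eq_iff)
  have nb1: "nbrs T0 1 = {2..N}"
    unfolding T0_def nbrs_def by (auto simp: doubleton_eq_iff)
  have sub0: "T0 \<subseteq> edges_on N"
    unfolding T0_def edges_on_def by fastforce
  have adj0: "(i,1) \<in> adj T0 \<and> (1,i) \<in> adj T0" if "i \<in> {2..N}" for i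
    using that unfolding T0_def adj_def by (auto simp: insert_commute)
  have reach: "(i,1) \<in> (adj T0)\<^sup>* \<and> (1,i) \<in> (adj T0)\<^sup>*" if "i \<in> {1..N}" for i
  proof (cases "i = 1")
    case False
    hence "i \<in> {2..N}" using that by auto
    thus ?thesis using adj0 by blast
  qed auto
  have conn0: "connected_on N T0"
    unfolding connected_on_def using reach by (meson rtrancl_trans)
  have bridge: "\<not> connected_on N (T0 - {e})" if "e \<in> T0" for e
  proof
    assume c: "connected_on N (T0 - {e})"
    obtain k where k: "k \<in> {2..N}" "e = {1,k}" using \<open>e \<in> T0\<close> unfolding T0_def by auto
    have "(k, 1) \<in> (adj (T0 - {e}))\<^sup>*" using c k unfolding connected_on_def by auto
    then show False
    proof (cases rule: converse_rtranclE)
      case base then show ?thesis using k by simp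
    next
      case (step m)
      then show ?thesis using k unfolding adj_def T0_def by (auto simp: doubleton_eq_iff)
    qed
  qed
  have st0: "spanning_tree N T0" unfolding spanning_tree_def using sub0 conn0 bridge by blast
  have card0: "card (nbrs T0 N) = 1" using nb0 N1 by simp
  define S where "S = (\<Sum>i=2..N. phi \<gamma> i 1) + phi \<gamma> 1 N"
  have lower: "S \<le> (\<Sum>i=1..N. Min (phi \<gamma> i ` nbrs T0 i))"
  proof -
    have "(\<Sum>i=1..N. Min (phi \<gamma> i ` nbrs T0 i)) = Min (phi \<gamma> 1 ` nbrs T0 1) + (\<Sum>i=Suc 1..N. Min (phi \<gamma> i ` nbrs T0 i))"
      using N1 by (subst sum.atLeast_Suc_atMost) auto
    also have "(\<Sum>i=Suc 1..N. Min (phi \<gamma> i ` nbrs T0 i)) = (\<Sum>i=2..N. phi \<gamma> i 1)"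
      by (rule sum.cong) (auto simp: nb0)
    finally have e: "(\<Sum>i=1..N. Min (phi \<gamma> i ` nbrs T0 i)) = Min (phi \<gamma> 1 ` {2..N}) + (\<Sum>i=2..N. phi \<gamma> i 1)"
      using nb1 by simp
    have "phi \<gamma> 1 N \<le> Min (phi \<gamma> 1 ` {2..N})"
    proof (rule Min.boundedI)
      show "finite (phi \<gamma> 1 ` {2..N})" by simp
      show "phi \<gamma> 1 ` {2..N} \<noteq> {}" using N1 by auto
    next
      fix a assume "a \<in> phi \<gamma> 1 ` {2..N}"
      then obtain j where j: "j \<in> {2..N}" "a = phi \<gamma> 1 j" by auto
      have "FF \<gamma> 1 N \<le> FF \<gamma> 1 j" using pos[of j] g1 j mono[of j N]
        by (intro FF_mono) auto
      thus "phi \<gamma> 1 N \<le> a" using phi_split[of \<gamma> 1 N] phi_split[of \<gamma> 1 j] pos[of j] pos[of N] j N1 g1 by auto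
    qed
    thus ?thesis using e unfolding S_def by linarith
  qed
  have upper: "(\<Sum>i=1..N. Min (phi \<gamma> i ` nbrs T i)) \<le> S" if st: "spanning_tree N T" for T
  proof -
    let ?c = "\<lambda>i. Min (phi \<gamma> i ` nbrs T i)"
    have sub: "T \<subseteq> edges_on N" and conn: "connected_on N T" using st unfolding spanning_tree_def by auto
    have hc: "?c i \<le> phi \<gamma> i 1" if "i \<in> {2..N}" for i
    proof -
      have "\<exists>j. j \<in> nbrs T i" using has_nbr[OF conn, of i] that N1 by auto
      then obtain j where j: "j \<in> nbrs T i" by blast
      have jr: "j \<in> {1..N}" using nbrs_sub[OF sub, of i] j by blast
      have "FF \<gamma> i j \<le> FF \<gamma> i 1" using pos[of i] g1 that jr mono[of 1 j]
        by (intro FF_mono) auto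
      hence "phi \<gamma> i j \<le> phi \<gamma> i 1"
        using phi_split[of \<gamma> i j] phi_split[of \<gamma> i 1] pos[of i] pos[of j] that jr g1 by auto
      thus ?thesis using c_le[OF sub j, of \<gamma>] by linarith
    qed
    have "(1, N) \<in> (adj T)\<^sup>*" using conn N1 unfolding connected_on_def by auto
    hence "(\<lambda>x y. (x, y) \<in> adj T)\<^sup>*\<^sup>* 1 N" by (simp add: rtranclp_rtrancl_eq)
    then obtain xs0 where "rtrancl_path (\<lambda>x y. (x, y) \<in> adj T) 1 xs0 N"
      using rtranclp_eq_rtrancl_path by metis
    then obtain xs where p: "rtrancl_path (\<lambda>x y. (x, y) \<in> adj T) 1 xs N" and d: "distinct (1 # xs)"
      using rtrancl_path_distinct by metis
    define W where "W = set (1 # xs)"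
    have Wsub: "W \<subseteq> {1..N}"
    proof
      fix z assume "z \<in> W"
      then consider "z = 1" | "z \<in> set xs" unfolding W_def by auto
      then show "z \<in> {1..N}"
      proof cases
        case 2
        then obtain x where "(x, z) \<in> adj T" using rtrancl_path_Range[OF p] by blast
        then show ?thesis using adj_nbrs nbrs_sub[OF sub] by blast
      qed (use N1 in auto)
    qed
    have "xs \<noteq> []" using p N1 by (auto elim: rtrancl_path.cases)
    hence NW: "N \<in> W" using rtrancl_path_last[OF p] unfolding W_def by (metis last_in_set list.set_intros(2))
    have oneW: "1 \<in> W" unfolding W_def by simp
    have P: "(\<Sum>i\<in>W - {N}. ?c i) \<le> (\<Sum>i\<in>W - {1, N}. phi \<gamma> i 1) + phi \<gamma> 1 N"
    proof -
      have "(\<Sum>i\<in>set (1 # xs) - {N}. ?c i) \<le> (\<Sum>i\<in>set (1 # xs) - {1, N}. phi \<gamma> i 1) + phi \<gamma> 1 N + log 2 (\<gamma> 1) - log 2 (\<gamma> 1)"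
        using path_lemma[of T N \<gamma> 1 xs N, OF sub g1 mono p] d N1 by blast
      thus ?thesis unfolding W_def by simp
    qed
    have finW: "finite W" unfolding W_def by simp
    have s1: "(\<Sum>i=1..N. ?c i) = (\<Sum>i\<in>{1..N} - W. ?c i) + (\<Sum>i\<in>W. ?c i)"
      using Wsub by (subst sum.subset_diff) auto
    have s2: "(\<Sum>i\<in>W. ?c i) = ?c N + (\<Sum>i\<in>W - {N}. ?c i)"
      using finW NW by (rule sum.remove)
    have W1sub: "W - {1} \<subseteq> {2..N}" using Wsub by auto
    have s3: "(\<Sum>i=2..N. phi \<gamma> i 1) = (\<Sum>i\<in>{2..N} - (W - {1}). phi \<gamma> i 1) + (\<Sum>i\<in>W - {1}. phi \<gamma> i 1)"
      using W1sub by (subst sum.subset_diff) auto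
    have e3: "{2..N} - (W - {1}) = {1..N} - W" using oneW by (auto simp: Suc_le_eq) (metis One_nat_def Suc_1 Suc_le_eq le_neq_implies_less)
    have s4: "(\<Sum>i\<in>W - {1}. phi \<gamma> i 1) = phi \<gamma> N 1 + (\<Sum>i\<in>W - {1} - {N}. phi \<gamma> i 1)"
      using finW NW N1 by (intro sum.remove) auto
    have e4: "W - {1} - {N} = W - {1, N}" by auto
    have r: "(\<Sum>i\<in>{1..N} - W. ?c i) \<le> (\<Sum>i\<in>{1..N} - W. phi \<gamma> i 1)"
      by (rule sum_mono) (use hc oneW e3 in blast)
    have cN: "?c N \<le> phi \<gamma> N 1" using hc N1 by auto
    show ?thesis using s1 s2 s3 s4 r cN P unfolding S_def e3 e4 by linarith
  qed
  have opt: "sum_rate_optimal \<gamma> N T0"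
    unfolding sum_rate_optimal_def
  proof (intro conjI allI impI)
    show "spanning_tree N T0" by (rule st0)
    fix T assume "spanning_tree N T"
    hence "(\<Sum>i=1..N. Min (phi \<gamma> i ` nbrs T i)) \<le> (\<Sum>i=1..N. Min (phi \<gamma> i ` nbrs T0 i))"
      using upper lower by (meson order_trans)
    moreover have "0 \<le> 1 / (2 * (real N - 1))" using assms(1) by simp
    ultimately show "sum_rate \<gamma> N T \<le> sum_rate \<gamma> N T0"
      unfolding sum_rate_def by (intro mult_left_mono)
  qed
  show ?thesis using opt card0 by blast
qed

end
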